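(* Let $S$ be a finite set of points in $\mathbb{R}^d$ with Euclidean distance, $f\ge0$ an integer, $0<\theta<\pi/4$, $\mathcal{C}$ a cone collection as in the context, and $\Theta=\Theta(\theta,2f+1)$. Let $F$ be a set of edges of $\Theta$ such that $(S,F)$ has maximum degree at most $f$. Then for every edge $\{p,q\}$ of $K_S\setminus F$, $\delta_{\Theta\setminus F}(p,q)\le t\,|pq|$, where $t=1/(\cos\theta-\sin\theta)$.
   Context: $K_S$ is the complete graph on $S$ with edge weights the Euclidean distances; all graphs have Euclidean edge weights; $\delta_X$ is shortest-path distance in $X$; $X\setminus F$ is $X$ with the edges of $F$ removed. $\mathcal{C}$ is a finite collection of cones with apex at the origin covering $\mathbb{R}^d$, each of angular diameter at most $\theta$, i.e. $\max\{\angle(0x,0y):x,y\in C\setminus\{0\}\}\le\theta$. For each $C\in\mathcal{C}$ fix a ray $\ell_C$ from the origin contained in $C$. For $p\in S$: $C+p=\{x+p:x\in C\}$, $\ell_C+p$ is the translate of $\ell_C$ emanating from $p$, and $S_{p,C}=(C+p)\cap(S\setminus\{p\})$. The graph $\Theta(\theta,k)$ has vertex set $S$, and for each $p\in S$ and $C\in\mathcal{C}$ it contains an edge from $p$ to each of $\min(k,|S_{p,C}|)$ points of $S_{p,C}$ whose orthogonal projections onto $\ell_C+p$ are closest to $p$ (ties broken arbitrarily). *)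

theory Defs
  imports "HOL-Analysis.Analysis"
begin

definition vec_angle :: "'a::euclidean_space \<Rightarrow> 'a \<Rightarrow> real" where
  "vec_angle x y = arccos ((x \<bullet> y) / (norm x * norm y))"

definition angular_diam_le :: "'a::euclidean_space set \<Rightarrow> real \<Rightarrow> bool" where
  "angular_diam_le C \<theta> \<longleftrightarrow> (\<forall>x\<in>C - {0}. \<forall>y\<in>C - {0}. vec_angle x y \<le> \<theta>)"

definition cone_collection ::
  "'a::euclidean_space set set \<Rightarrow> real \<Rightarrow> ('a set \<Rightarrow> 'a) \<Rightarrow> bool" where
  "cone_collection Cs \<theta> u \<longleftrightarrow>
     finite Cs \<and> \<Union>Cs = UNIV \<and>
     (\<forall>C\<in>Cs. cone C \<and> angular_diam_le C \<theta> \<and> u C \<noteq> 0 \<and> (\<forall>s\<ge>0. s *\<^sub>R u C \<in> C))"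

definition cone_pts :: "'a::euclidean_space set \<Rightarrow> 'a \<Rightarrow> 'a set \<Rightarrow> 'a set" where
  "cone_pts S p C = ((\<lambda>x. x + p) ` C) \<inter> (S - {p})"

(* distance from p of the orthogonal projection of x onto the ray l_C + p,
   the ray being {p + s *R v | s >= 0} *)
definition proj_dist :: "'a::euclidean_space \<Rightarrow> 'a \<Rightarrow> 'a \<Rightarrow> real" where
  "proj_dist v p x = max 0 (((x - p) \<bullet> v) / norm v)"

(* N p C is the set of neighbours chosen by p in cone C for the graph Theta(theta,k),
   ties broken arbitrarily (any valid choice). *)
definition theta_selection ::
  "'a::euclidean_space set \<Rightarrow> 'a set set \<Rightarrow> ('a set \<Rightarrow> 'a) \<Rightarrow> nat \<Rightarrow> ('a \<Rightarrow> 'a set \<Rightarrow> 'a set) \<Rightarrow> bool" where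
  "theta_selection S Cs u k N \<longleftrightarrow>
     (\<forall>p\<in>S. \<forall>C\<in>Cs.
        N p C \<subseteq> cone_pts S p C \<and>
        card (N p C) = min k (card (cone_pts S p C)) \<and>
        (\<forall>x\<in>N p C. \<forall>y\<in>cone_pts S p C - N p C. proj_dist (u C) p x \<le> proj_dist (u C) p y))"

definition theta_edges :: "'a set \<Rightarrow> 'a set set \<Rightarrow> ('a \<Rightarrow> 'a set \<Rightarrow> 'a set) \<Rightarrow> 'a set set" where
  "theta_edges S Cs N = {{p, q} | p q. p \<in> S \<and> (\<exists>C\<in>Cs. q \<in> N p C)}"

definition edge_degree :: "'a set set \<Rightarrow> 'a \<Rightarrow> nat" where
  "edge_degree F v = card {e \<in> F. v \<in> e}"

definition is_walk :: "'a set set \<Rightarrow> 'a \<Rightarrow> 'a \<Rightarrow> 'a list \<Rightarrow> bool" where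
  "is_walk E p q xs \<longleftrightarrow> xs \<noteq> [] \<and> hd xs = p \<and> last xs = q \<and>
     (\<forall>i < length xs - 1. {xs ! i, xs ! Suc i} \<in> E)"

definition walk_len :: "'a::metric_space list \<Rightarrow> real" where
  "walk_len xs = (\<Sum>i < length xs - 1. dist (xs ! i) (xs ! Suc i))"

(* delta_E(p,q); equals \<infinity> if q is not reachable from p *)
definition graph_dist :: "'a::metric_space set set \<Rightarrow> 'a \<Rightarrow> 'a \<Rightarrow> ereal" where
  "graph_dist E p q = (INF xs \<in> {xs. is_walk E p q xs}. ereal (walk_len xs))"

end

theory Submission
  imports Defs
begin

lemma sin_lt_cos:
  assumes "0 < \<theta>" "\<theta> < pi / 4"
  shows "sin \<theta> < cos \<theta>"
proof -
  have "cos (pi/2 - \<theta>) < cos \<theta>"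
    by (rule cos_monotone_0_pi) (use assms in auto)
  moreover have "cos (pi/2 - \<theta>) = sin \<theta>" by (simp add: cos_diff)
  ultimately show ?thesis by simp
qed

lemma angle_inner:
  fixes x y :: "'a::euclidean_space"
  assumes "x \<noteq> 0" "y \<noteq> 0" "vec_angle x y \<le> \<theta>" "0 \<le> \<theta>" "\<theta> \<le> pi"
  shows "norm x * norm y * cos \<theta> \<le> x \<bullet> y"
proof -
  define r where "r = (x \<bullet> y) / (norm x * norm y)"
  have pos: "norm x * norm y > 0" using assms by simp
  have "\<bar>x \<bullet> y\<bar> \<le> norm x * norm y" by (rule Cauchy_Schwarz_ineq2)
  hence r1: "-1 \<le> r" "r \<le> 1" unfolding r_def using pos
    by (auto simp: divide_simps abs_le_iff)
  have "arccos r \<le> \<theta>" using assms(3) unfolding vec_angle_def r_def .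
  hence "cos \<theta> \<le> cos (arccos r)"
    using arccos_bounded[OF r1] assms by (intro cos_monotone_0_pi_le) auto
  hence "cos \<theta> \<le> r" using cos_arccos[OF r1] by simp
  hence "cos \<theta> * (norm x * norm y) \<le> x \<bullet> y" unfolding r_def using pos
    by (simp add: divide_simps)
  thus ?thesis by (simp add: algebra_simps)
qed

lemma geom:
  fixes a b u :: "'a::euclidean_space"
  assumes "a \<noteq> 0" "b \<noteq> 0" "u \<noteq> 0"
    and ab: "norm a * norm b * cos \<theta> \<le> a \<bullet> b"
    and au: "norm a * norm u * cos \<theta> \<le> a \<bullet> u"
    and aub: "a \<bullet> u \<le> b \<bullet> u" and th: "0 < \<theta>" "\<theta> < pi / 4"
  shows "norm (b - a) \<le> norm b - (cos \<theta> - sin \<theta>) * norm a"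
    and "norm (b - a) < norm b"
proof -
  define X where "X = norm a"
  define Y where "Y = norm b"
  define cs where "cs = cos \<theta>"
  define sn where "sn = sin \<theta>"
  have X0: "X > 0" "Y > 0" using assms unfolding X_def Y_def by auto
  have sn0: "sn > 0" unfolding sn_def using th by (intro sin_gt_zero) auto
  have csn: "sn < cs" unfolding sn_def cs_def using sin_lt_cos th by blast
  have pyth: "sn^2 + cs^2 = 1" unfolding sn_def cs_def by simp
  have "norm a * norm u * cos \<theta> \<le> norm b * norm u"
    using au aub norm_cauchy_schwarz[of b u] by linarith
  hence XY: "X * cs \<le> Y" using assms(3) unfolding X_def Y_def cs_def
    by (simp add: mult.commute mult.left_commute)
  have nonneg: "(cs - sn) * X \<le> Y"
  proof -
    have "(cs - sn) * X = X * cs - sn * X" by (simp add: algebra_simps)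
    moreover have "sn * X > 0" using sn0 X0 by simp
    ultimately show ?thesis using XY by linarith
  qed
  have sq: "(norm (b - a))^2 = Y^2 - 2 * (a \<bullet> b) + X^2"
    unfolding X_def Y_def by (simp add: power2_norm_eq_inner inner_diff algebra_simps inner_commute)
  have D: "X * Y * cs \<le> a \<bullet> b" using ab unfolding X_def Y_def cs_def .
  have key: "X^2 * sn * cs \<le> X * Y * sn"
  proof -
    have "X * cs * (X * sn) \<le> Y * (X * sn)" using XY X0 sn0 by (intro mult_right_mono) auto
    thus ?thesis by (simp add: power2_eq_square algebra_simps)
  qed
  have "(norm (b - a))^2 \<le> (Y - (cs - sn) * X)^2"
  proof -
    have "(Y - (cs - sn) * X)^2 = Y^2 - 2*X*Y*cs + 2*X*Y* sn + X^2 * (cs^2 + sn^2) - 2 * X^2 * sn * cs"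
      by (simp add: power2_eq_square algebra_simps)
    also have "\<dots> = Y^2 - 2*X*Y*cs + 2*X*Y* sn + X^2 - 2 * X^2 * sn * cs" using pyth by simp
    finally show ?thesis using sq D key by linarith
  qed
  hence "norm (b - a) \<le> Y - (cs - sn) * X"
  proof -
    have "0 \<le> Y - (cs - sn) * X" using nonneg by linarith
    with power2_le_imp_le[OF \<open>(norm (b - a))^2 \<le> (Y - (cs - sn) * X)^2\<close>] show ?thesis by blast
  qed
  thus "norm (b - a) \<le> norm b - (cos \<theta> - sin \<theta>) * norm a"
    unfolding X_def Y_def cs_def sn_def .
  moreover have "(cs - sn) * X > 0" using csn X0 by simp
  ultimately show "norm (b - a) < norm b" unfolding X_def Y_def cs_def sn_def by linarith
qed

lemma walk_cons:
  assumes "is_walk E r q ys" "{x, r} \<in> E"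
  shows "is_walk E x q (x # ys) \<and> walk_len (x # ys) = dist x r + walk_len ys"
proof -
  obtain m where m: "length ys = Suc m" using assms(1) unfolding is_walk_def
    by (cases ys) auto
  have h: "hd ys = r" "last ys = q" "ys \<noteq> []" using assms(1) unfolding is_walk_def by auto
  have ys0: "ys ! 0 = r" using h by (cases ys) auto
  have w: "is_walk E x q (x # ys)"
    unfolding is_walk_def
  proof (intro conjI allI impI)
    fix i assume "i < length (x # ys) - 1"
    then show "{(x # ys) ! i, (x # ys) ! Suc i} \<in> E"
    proof (cases i)
      case 0 then show ?thesis using ys0 assms(2) by simp
    next
      case (Suc j)
      then have "j < length ys - 1" using \<open>i < length (x # ys) - 1\<close> by simp
      then show ?thesis using assms(1) Suc unfolding is_walk_def by simp
    qed
  qed (use h in auto)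
  have "walk_len (x # ys) = (\<Sum>i<Suc m. dist ((x # ys) ! i) ((x # ys) ! Suc i))"
    unfolding walk_len_def using m by simp
  also have "\<dots> = dist x r + (\<Sum>i<m. dist (ys ! i) (ys ! Suc i))"
    by (subst sum.lessThan_Suc_shift) (simp add: ys0)
  also have "\<dots> = dist x r + walk_len ys" unfolding walk_len_def using m by simp
  finally show ?thesis using w by simp
qed

theorem lemma11:
  fixes S :: "'a::euclidean_space set"
    and Cs :: "'a set set" and u :: "'a set \<Rightarrow> 'a"
    and N :: "'a \<Rightarrow> 'a set \<Rightarrow> 'a set"
    and f :: nat and \<theta> :: real and F :: "'a set set"
  assumes "finite S"
    and "0 < \<theta>" and "\<theta> < pi / 4"
    and "cone_collection Cs \<theta> u"
    and "theta_selection S Cs u (2 * f + 1) N"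
    and "F \<subseteq> theta_edges S Cs N"
    and "\<forall>v\<in>S. edge_degree F v \<le> f"
    and "p \<in> S" and "q \<in> S" and "p \<noteq> q" and "{p, q} \<notin> F"
  shows "graph_dist (theta_edges S Cs N - F) p q
           \<le> ereal (1 / (cos \<theta> - sin \<theta>) * dist p q)"
proof -
  define E where "E = theta_edges S Cs N - F"
  define c where "c = cos \<theta> - sin \<theta>"
  define t where "t = 1 / c"
  define M where "M = (\<lambda>x y :: 'a. {(a, b) \<in> S \<times> S. dist a b < dist x y})"
  have c0: "c > 0" unfolding c_def using sin_lt_cos assms(2,3) by simp
  have c1: "c \<le> 1"
  proof -
    have "sin \<theta> > 0" using assms(2,3) by (intro sin_gt_zero) auto
    thus ?thesis unfolding c_def using cos_le_one[of \<theta>] by linarith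
  qed
  have t1: "t \<ge> 1" unfolding t_def using c0 c1 by simp
  have tc: "t * c = 1" unfolding t_def using c0 by simp
  have NS: "\<And>x C. x \<in> S \<Longrightarrow> C \<in> Cs \<Longrightarrow> N x C \<subseteq> cone_pts S x C"
    using assms(5) unfolding theta_selection_def by blast
  have finTE: "finite (theta_edges S Cs N)"
  proof -
    have "theta_edges S Cs N \<subseteq> Pow S"
    proof
      fix e assume "e \<in> theta_edges S Cs N"
      then obtain a b C where "e = {a, b}" "a \<in> S" "C \<in> Cs" "b \<in> N a C"
        unfolding theta_edges_def by blast
      moreover have "b \<in> S" using NS[OF \<open>a \<in> S\<close> \<open>C \<in> Cs\<close>] \<open>b \<in> N a C\<close>
        unfolding cone_pts_def by blast
      ultimately show "e \<in> Pow S" by simp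
    qed
    thus ?thesis using assms(1) finite_subset by blast
  qed
  have finF: "finite F" using finite_subset[OF assms(6) finTE] .
  have CC0: "\<Union>Cs = UNIV" "\<And>C. C \<in> Cs \<Longrightarrow> angular_diam_le C \<theta> \<and> u C \<noteq> 0 \<and> (\<forall>s\<ge>0. s *\<^sub>R u C \<in> C)"
    using assms(4) unfolding cone_collection_def by blast+
  have CC: "\<Union>Cs = UNIV" "\<And>C. C \<in> Cs \<Longrightarrow> angular_diam_le C \<theta> \<and> u C \<noteq> 0 \<and> u C \<in> C"
  proof -
    show "\<Union>Cs = UNIV" by (rule CC0(1))
    fix C assume "C \<in> Cs"
    from CC0(2)[OF this] have h: "angular_diam_le C \<theta> \<and> u C \<noteq> 0" "\<forall>s\<ge>0. s *\<^sub>R u C \<in> C" by auto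
    from h(2) have "1 *\<^sub>R u C \<in> C" using zero_le_one by blast
    note h = h(1) this
    thus "angular_diam_le C \<theta> \<and> u C \<noteq> 0 \<and> u C \<in> C" using h by simp
  qed
  have th0: "0 \<le> \<theta>" "\<theta> \<le> pi" using assms(2,3) pi_gt_zero by linarith+
  have main: "\<And>n. \<forall>x y. x \<in> S \<longrightarrow> y \<in> S \<longrightarrow> x \<noteq> y \<longrightarrow> {x, y} \<notin> F \<longrightarrow> card (M x y) = n \<longrightarrow>
      (\<exists>xs. is_walk E x y xs \<and> walk_len xs \<le> t * dist x y)"
  proof -
    fix n show "?thesis n"
    proof (induction n rule: less_induct)
      case (less n)
      show ?case
      proof (intro allI impI)
        fix x y assume xS: "x \<in> S" and yS: "y \<in> S" and xy: "x \<noteq> y" and xyF: "{x, y} \<notin> F"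
          and cn: "card (M x y) = n"
        obtain C where C: "C \<in> Cs" "y - x \<in> C" using CC(1) by blast
        have ycp: "y \<in> cone_pts S x C" unfolding cone_pts_def using C yS xy
          by (auto intro!: image_eqI[where x = "y - x"])
        show "\<exists>xs. is_walk E x y xs \<and> walk_len xs \<le> t * dist x y"
        proof (cases "y \<in> N x C")
          case True
          have "{x, y} \<in> E" unfolding E_def theta_edges_def using True xS C xyF by blast
          hence "is_walk E x y [x, y]" unfolding is_walk_def by simp
          moreover have "walk_len [x, y] \<le> t * dist x y" unfolding walk_len_def
            using t1 by (simp add: mult_le_cancel_right1)
          ultimately show ?thesis by blast
        next
          case False
          define Nx where "Nx = N x C"
          have Nxcp: "Nx \<subseteq> cone_pts S x C" unfolding Nx_def using NS xS C by blast
          have fincp: "finite (cone_pts S x C)" unfolding cone_pts_def using assms(1) by simp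
          have "card Nx < card (cone_pts S x C)"
            using Nxcp ycp False fincp unfolding Nx_def by (intro psubset_card_mono) auto
          moreover have "card Nx = min (2 * f + 1) (card (cone_pts S x C))"
            using assms(5) xS C unfolding theta_selection_def Nx_def by blast
          ultimately have cardNx: "card Nx = 2 * f + 1" by linarith
          have NxS: "Nx \<subseteq> S - {x}" using Nxcp unfolding cone_pts_def by blast
          have finNx: "finite Nx" using NxS assms(1) finite_subset by blast
          define B1 where "B1 = {r \<in> Nx. {x, r} \<in> F}"
          define B2 where "B2 = {r \<in> Nx. {r, y} \<in> F}"
          have "card B1 \<le> card {e \<in> F. x \<in> e}"
          proof (rule card_inj_on_le[where f = "\<lambda>r. {x, r}"])
            show "inj_on (\<lambda>r. {x, r}) B1" unfolding inj_on_def B1_def using NxS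
              by (auto simp: doubleton_eq_iff)
          qed (auto simp: B1_def finF)
          hence cB1: "card B1 \<le> f" using assms(7) xS unfolding edge_degree_def by fastforce
          have "card B2 \<le> card {e \<in> F. y \<in> e}"
          proof (rule card_inj_on_le[where f = "\<lambda>r. {r, y}"])
            show "inj_on (\<lambda>r. {r, y}) B2" unfolding inj_on_def B2_def using False
              unfolding Nx_def by (auto simp: doubleton_eq_iff)
          qed (auto simp: B2_def finF)
          hence cB2: "card B2 \<le> f" using assms(7) yS unfolding edge_degree_def by fastforce
          have "\<not> Nx \<subseteq> B1 \<union> B2"
          proof
            assume "Nx \<subseteq> B1 \<union> B2"
            hence "card Nx \<le> card (B1 \<union> B2)" using finNx
              by (intro card_mono) (auto simp: B1_def B2_def)
            also have "\<dots> \<le> card B1 + card B2" by (rule card_Un_le)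
            finally show False using cB1 cB2 cardNx by linarith
          qed
          then obtain r where r: "r \<in> Nx" "{x, r} \<notin> F" "{r, y} \<notin> F"
            unfolding B1_def B2_def by blast
          have rS: "r \<in> S" "r \<noteq> x" using r NxS by auto
          have ry: "r \<noteq> y" using r False unfolding Nx_def by blast
          have xrE: "{x, r} \<in> E" unfolding E_def theta_edges_def
            using r xS C unfolding Nx_def by blast
          have rC: "r - x \<in> C" using r Nxcp unfolding cone_pts_def by auto
          define a where "a = r - x"
          define b where "b = y - x"
          have a0: "a \<noteq> 0" "b \<noteq> 0" using rS xy unfolding a_def b_def by auto
          have ad: "angular_diam_le C \<theta>" "u C \<noteq> 0" "u C \<in> C" using CC(2)[OF C(1)] by auto
          have ab: "norm a * norm b * cos \<theta> \<le> a \<bullet> b"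
            using ad(1) rC C(2) a0 unfolding angular_diam_le_def a_def b_def
            by (intro angle_inner th0) auto
          have au: "norm a * norm (u C) * cos \<theta> \<le> a \<bullet> u C"
            using ad rC a0 unfolding angular_diam_le_def a_def
            by (intro angle_inner th0) auto
          have bu: "norm b * norm (u C) * cos \<theta> \<le> b \<bullet> u C"
            using ad C(2) a0 unfolding angular_diam_le_def b_def
            by (intro angle_inner th0) auto
          have cpos: "cos \<theta> > 0" using sin_lt_cos[OF assms(2,3)] sin_gt_zero[of \<theta>] assms(2,3)
            by simp
          have pa: "norm a * norm (u C) * cos \<theta> > 0" using a0 ad cpos by simp
          have pb: "norm b * norm (u C) * cos \<theta> > 0" using a0 ad cpos by simp
          have aupos: "a \<bullet> u C > 0" using au pa by linarith
          have bupos: "b \<bullet> u C > 0" using bu pb by linarith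
          have nu: "norm (u C) > 0" using ad by simp
          have pr: "proj_dist (u C) x r = (a \<bullet> u C) / norm (u C)"
            unfolding proj_dist_def a_def[symmetric] using aupos nu by simp
          have py: "proj_dist (u C) x y = (b \<bullet> u C) / norm (u C)"
            unfolding proj_dist_def b_def[symmetric] using bupos nu by simp
          have "proj_dist (u C) x r \<le> proj_dist (u C) x y"
            using assms(5) xS C r(1) ycp False unfolding theta_selection_def Nx_def by blast
          hence "(a \<bullet> u C) / norm (u C) \<le> (b \<bullet> u C) / norm (u C)" using pr py by simp
          hence aub: "a \<bullet> u C \<le> b \<bullet> u C" using nu by (simp add: divide_le_cancel)
          have g1: "norm (b - a) \<le> norm b - c * norm a" and g2: "norm (b - a) < norm b"
            using geom[OF a0 ad(2) ab au aub assms(2,3)] unfolding c_def by auto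
          have dry: "dist r y = norm (b - a)" unfolding a_def b_def dist_norm
            by (simp add: norm_minus_commute)
          have dxy: "dist x y = norm b" unfolding b_def dist_norm by (simp add: norm_minus_commute)
          have dxr: "dist x r = norm a" unfolding a_def dist_norm by (simp add: norm_minus_commute)
          have finM: "finite (M x y)"
          proof (rule finite_subset)
            show "M x y \<subseteq> S \<times> S" unfolding M_def by blast
            show "finite (S \<times> S)" using assms(1) by simp
          qed
          have "M r y \<subset> M x y"
          proof
            show "M r y \<subseteq> M x y" unfolding M_def using g2 dry dxy by auto
            have "(r, y) \<in> M x y" unfolding M_def using rS yS g2 dry dxy by auto
            moreover have "(r, y) \<notin> M r y" unfolding M_def by auto
            ultimately show "M r y \<noteq> M x y" by blast
          qed
          hence "card (M r y) < n" using cn finM psubset_card_mono by blast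
          then obtain ys where ys: "is_walk E r y ys" "walk_len ys \<le> t * dist r y"
            using less.IH rS yS ry r(3) by blast
          from walk_cons[OF ys(1) xrE] have wc: "is_walk E x y (x # ys)"
            "walk_len (x # ys) = dist x r + walk_len ys" by auto
          have "walk_len (x # ys) \<le> norm a + t * norm (b - a)" using wc(2) ys(2) dxr dry by simp
          also have "\<dots> \<le> norm a + t * (norm b - c * norm a)"
            using g1 t1 by (intro add_left_mono mult_left_mono) auto
          also have "\<dots> = t * norm b" using tc by (simp add: algebra_simps)
          finally show ?thesis using wc(1) dxy by auto
        qed
      qed
    qed
  qed
  obtain xs where xs: "is_walk E p q xs" "walk_len xs \<le> t * dist p q"
    using main assms(8-11) by blast
  have "graph_dist E p q \<le> ereal (walk_len xs)"
    unfolding graph_dist_def using xs(1) by (intro INF_lower) auto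
  also have "\<dots> \<le> ereal (t * dist p q)" using xs(2) by simp
  finally show ?thesis unfolding E_def t_def c_def by simp
qed

end
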